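(* Let $X\subseteq\mathbb{R}^{\mathbb{Z}_<}$, $f:X\to\mathbb{R}^{\mathbb{Z}_<}$ and $x_0\in X$. Then $f$ is $\iota$-continuous at $x_0$ if and only if for every sequence $(x_n)$ in $X$ with $\mathrm{HC}(x_n,x_0)$, the sequence $(f(x_n))$ satisfies $\mathrm{HC}(f(x_n),f(x_0))$.
   Context: $\mathbb{R}^{\mathbb{Z}_<}$ is the set of formal series $\sum_{i\ge -k}a_i\epsilon^i$ ($k\in\mathbb{N}\cup\{0\}$, $a_i\in\mathbb{R}$), with coefficientwise addition, Cauchy-product multiplication and lexicographic order; $|\cdot|$ is the associated absolute value. $f$ is $\iota$-continuous at $x_0$ means: for every positive $\iota_1\in\mathbb{R}^{\mathbb{Z}_<}$ there is a positive $\iota_2\in\mathbb{R}^{\mathbb{Z}_<}$ such that $x\in X$ and $|x-x_0|<\iota_2$ imply $|f(x)-f(x_0)|<\iota_1$. $\mathrm{HC}(s_n,s)$ (hyperconvergence) means: for every $r\in\mathbb{R}^{\mathbb{Z}_<}$ with $r>0$ there is $N$ such that $|s_n-s|<r$ for all $n>N$. *)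

theory Defs
  imports "HOL-Computational_Algebra.Formal_Laurent_Series"
begin

text \<open>The field R^{Z<}: formal Laurent series with finite principal part,
  i.e. type real fls (coefficient of eps^i is fls_nth x i).\<close>

type_synonym lc = "real fls"

definition lc_less :: "lc \<Rightarrow> lc \<Rightarrow> bool" where
  "lc_less x y \<longleftrightarrow> (\<exists>i. fls_nth x i < fls_nth y i \<and> (\<forall>j<i. fls_nth x j = fls_nth y j))"

definition lc_abs :: "lc \<Rightarrow> lc" where
  "lc_abs x = (if lc_less x 0 then - x else x)"

definition iota_continuous_at :: "lc set \<Rightarrow> (lc \<Rightarrow> lc) \<Rightarrow> lc \<Rightarrow> bool" where
  "iota_continuous_at X f x0 \<longleftrightarrow>
     (\<forall>i1. lc_less 0 i1 \<longrightarrow> (\<exists>i2. lc_less 0 i2 \<and>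
        (\<forall>x\<in>X. lc_less (lc_abs (x - x0)) i2 \<longrightarrow> lc_less (lc_abs (f x - f x0)) i1)))"

definition HC :: "(nat \<Rightarrow> lc) \<Rightarrow> lc \<Rightarrow> bool" where
  "HC s l \<longleftrightarrow> (\<forall>r. lc_less 0 r \<longrightarrow> (\<exists>N. \<forall>n>N. lc_less (lc_abs (s n - l)) r))"

end

theory Submission
  imports Defs
begin

lemma lc_less_trans:
  assumes "lc_less x y" "lc_less y z" shows "lc_less x z"
proof -
  obtain i where i: "fls_nth x i < fls_nth y i" "\<forall>j<i. fls_nth x j = fls_nth y j"
    using assms(1) unfolding lc_less_def by blast
  obtain k where k: "fls_nth y k < fls_nth z k" "\<forall>j<k. fls_nth y j = fls_nth z j"
    using assms(2) unfolding lc_less_def by blast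
  show ?thesis unfolding lc_less_def
  proof (cases "i < k")
    case True
    then show "\<exists>i. fls_nth x i < fls_nth z i \<and> (\<forall>j<i. fls_nth x j = fls_nth z j)"
      using i k by (intro exI[of _ i]) auto
  next
    case False
    then show "\<exists>i. fls_nth x i < fls_nth z i \<and> (\<forall>j<i. fls_nth x j = fls_nth z j)"
      using i k by (intro exI[of _ k]) (cases "i = k"; auto)
  qed
qed

definition dl :: "nat \<Rightarrow> lc" where "dl n = fls_shift (- int n) 1"

lemma dl_nth: "fls_nth (dl n) i = (if i = int n then 1 else 0)"
  by (simp add: dl_def)

lemma dl_pos: "lc_less 0 (dl n)"
  unfolding lc_less_def dl_nth by (intro exI[of _ "int n"]) auto

lemma dl_small:
  assumes "lc_less 0 r" shows "\<exists>N. \<forall>n>N. lc_less (dl n) r"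
proof -
  obtain k where k: "0 < fls_nth r k" "\<forall>j<k. fls_nth r j = 0"
    using assms unfolding lc_less_def by auto
  show ?thesis
  proof (intro exI[of _ "nat k"] allI impI)
    fix n assume "n > nat k"
    hence "int n > k" by linarith
    thus "lc_less (dl n) r" unfolding lc_less_def dl_nth using k
      by (intro exI[of _ k]) auto
  qed
qed

theorem mainTheorem16:
  fixes X :: "lc set" and f :: "lc \<Rightarrow> lc" and x0 :: lc
  assumes "x0 \<in> X"
  shows "iota_continuous_at X f x0 \<longleftrightarrow>
    (\<forall>xs. (\<forall>n. xs n \<in> X) \<longrightarrow> HC xs x0 \<longrightarrow> HC (\<lambda>n. f (xs n)) (f x0))"
proof
  assume c: "iota_continuous_at X f x0"
  show "\<forall>xs. (\<forall>n. xs n \<in> X) \<longrightarrow> HC xs x0 \<longrightarrow> HC (\<lambda>n. f (xs n)) (f x0)"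
  proof (intro allI impI)
    fix xs assume X: "\<forall>n. xs n \<in> X" and h: "HC xs x0"
    show "HC (\<lambda>n. f (xs n)) (f x0)" unfolding HC_def
    proof (intro allI impI)
      fix r assume r: "lc_less 0 r"
      obtain d where d: "lc_less 0 d"
        "\<forall>x\<in>X. lc_less (lc_abs (x - x0)) d \<longrightarrow> lc_less (lc_abs (f x - f x0)) r"
        using c r unfolding iota_continuous_at_def by blast
      obtain N where "\<forall>n>N. lc_less (lc_abs (xs n - x0)) d"
        using h d(1) unfolding HC_def by blast
      thus "\<exists>N. \<forall>n>N. lc_less (lc_abs (f (xs n) - f x0)) r" using d(2) X by blast
    qed
  qed
next
  assume s: "\<forall>xs. (\<forall>n. xs n \<in> X) \<longrightarrow> HC xs x0 \<longrightarrow> HC (\<lambda>n. f (xs n)) (f x0)"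
  show "iota_continuous_at X f x0"
  proof (rule ccontr)
    assume "\<not> iota_continuous_at X f x0"
    then obtain i1 where i1: "lc_less 0 i1" and
      bad: "\<forall>d. lc_less 0 d \<longrightarrow> (\<exists>x\<in>X. lc_less (lc_abs (x - x0)) d \<and>
             \<not> lc_less (lc_abs (f x - f x0)) i1)"
      unfolding iota_continuous_at_def by blast
    have "\<forall>n. \<exists>x. x \<in> X \<and> lc_less (lc_abs (x - x0)) (dl n) \<and>
             \<not> lc_less (lc_abs (f x - f x0)) i1"
      using bad dl_pos by blast
    then obtain xs where xs: "\<And>n. xs n \<in> X" "\<And>n. lc_less (lc_abs (xs n - x0)) (dl n)"
      "\<And>n. \<not> lc_less (lc_abs (f (xs n) - f x0)) i1"
      by metis
    have "HC xs x0" unfolding HC_def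
    proof (intro allI impI)
      fix r assume "lc_less 0 r"
      then obtain N where "\<forall>n>N. lc_less (dl n) r" using dl_small by blast
      thus "\<exists>N. \<forall>n>N. lc_less (lc_abs (xs n - x0)) r"
        using xs(2) lc_less_trans by blast
    qed
    hence "HC (\<lambda>n. f (xs n)) (f x0)" using s xs(1) by blast
    then obtain N where "\<forall>n>N. lc_less (lc_abs (f (xs n) - f x0)) i1"
      using i1 unfolding HC_def by blast
    thus False using xs(3)[of "Suc N"] by auto
  qed
qed

end
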